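(* Consider a market with $N$ players and $K\ge N$ arms in which every player has a strict preference order over arms and every arm has a strict preference order over players, and run the player-proposing Gale–Shapley (deferred acceptance) algorithm. Then at most $N$ proposals are made per player before termination. Consequently, each player's optimal stable match (its match in the player-optimal stable matching) is among its top $N$ preferred arms.
   Context: In player-proposing Gale–Shapley, each currently unmatched player proposes to its most preferred arm it has not yet proposed to; each arm tentatively holds the best proposer it has received (according to its strict preferences) and rejects the others; the algorithm terminates when every player is tentatively matched (or has exhausted its list), and outputs the player-optimal stable matching. *)

theory Defs
  imports Main
begin

text \<open>Players are 0..<N, arms are 0..<K.  Preferences are given as lists:
  plist p is player p's ranking of arms (most preferred first),
  alist a is arm a's ranking of players (most preferred first).\<close>

definition valid_prefs :: "nat \<Rightarrow> nat \<Rightarrow> (nat \<Rightarrow> nat list) \<Rightarrow> (nat \<Rightarrow> nat list) \<Rightarrow> bool" where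
  "valid_prefs N K plist alist \<longleftrightarrow>
     (\<forall>p<N. distinct (plist p) \<and> set (plist p) = {0..<K}) \<and>
     (\<forall>a<K. distinct (alist a) \<and> set (alist a) = {0..<N})"

definition prefers :: "'a list \<Rightarrow> 'a \<Rightarrow> 'a \<Rightarrow> bool" where
  "prefers xs x y \<longleftrightarrow> (\<exists>i j. i < j \<and> j < length xs \<and> xs ! i = x \<and> xs ! j = y)"

text \<open>State of deferred acceptance: (nxt, hold) where nxt p is the number of
  proposals player p has made so far and hold a is the player tentatively held by arm a.\<close>
type_synonym da_state = "(nat \<Rightarrow> nat) \<times> (nat \<Rightarrow> nat option)"

definition da_init :: da_state where
  "da_init = (\<lambda>_. 0, \<lambda>_. None)"

definition da_matched :: "nat \<Rightarrow> da_state \<Rightarrow> nat \<Rightarrow> bool" where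
  "da_matched K s p \<longleftrightarrow> (\<exists>a<K. snd s a = Some p)"

definition da_active :: "nat \<Rightarrow> nat \<Rightarrow> da_state \<Rightarrow> nat \<Rightarrow> bool" where
  "da_active N K s p \<longleftrightarrow> p < N \<and> \<not> da_matched K s p \<and> fst s p < K"

text \<open>One round of player-proposing Gale--Shapley: every active player proposes to
  its most preferred arm not yet proposed to; every arm keeps the best among its
  current holder and its new proposers and rejects the others.\<close>
definition da_step :: "nat \<Rightarrow> nat \<Rightarrow> (nat \<Rightarrow> nat list) \<Rightarrow> (nat \<Rightarrow> nat list) \<Rightarrow> da_state \<Rightarrow> da_state" where
  "da_step N K plist alist s =
     (let props = (\<lambda>a. {p. da_active N K s p \<and> plist p ! fst s p = a})
      in (\<lambda>p. if da_active N K s p then Suc (fst s p) else fst s p,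
          \<lambda>a. find (\<lambda>q. q \<in> set_option (snd s a) \<union> props a) (alist a)))"

definition da_terminated :: "nat \<Rightarrow> nat \<Rightarrow> da_state \<Rightarrow> bool" where
  "da_terminated N K s \<longleftrightarrow> (\<forall>p<N. \<not> da_active N K s p)"

definition is_matching :: "nat \<Rightarrow> nat \<Rightarrow> (nat \<Rightarrow> nat option) \<Rightarrow> bool" where
  "is_matching N K \<mu> \<longleftrightarrow>
     (\<forall>p<N. \<forall>a. \<mu> p = Some a \<longrightarrow> a < K) \<and>
     (\<forall>p<N. \<forall>q<N. p \<noteq> q \<longrightarrow> \<mu> p = None \<or> \<mu> p \<noteq> \<mu> q)"

definition blocking :: "nat \<Rightarrow> (nat \<Rightarrow> nat list) \<Rightarrow> (nat \<Rightarrow> nat list) \<Rightarrow> (nat \<Rightarrow> nat option) \<Rightarrow> nat \<Rightarrow> nat \<Rightarrow> bool" where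
  "blocking N plist alist \<mu> p a \<longleftrightarrow>
     (\<mu> p = None \<or> (\<exists>b. \<mu> p = Some b \<and> prefers (plist p) a b)) \<and>
     ((\<forall>q<N. \<mu> q \<noteq> Some a) \<or> (\<exists>q<N. \<mu> q = Some a \<and> prefers (alist a) p q))"

definition stable :: "nat \<Rightarrow> nat \<Rightarrow> (nat \<Rightarrow> nat list) \<Rightarrow> (nat \<Rightarrow> nat list) \<Rightarrow> (nat \<Rightarrow> nat option) \<Rightarrow> bool" where
  "stable N K plist alist \<mu> \<longleftrightarrow>
     is_matching N K \<mu> \<and> (\<forall>p<N. \<forall>a<K. \<not> blocking N plist alist \<mu> p a)"

definition weakly_prefers :: "nat list \<Rightarrow> nat option \<Rightarrow> nat option \<Rightarrow> bool" where
  "weakly_prefers xs x y \<longleftrightarrow>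
     x = y \<or> (\<exists>a. x = Some a \<and> (y = None \<or> (\<exists>b. y = Some b \<and> prefers xs a b)))"

definition player_optimal_stable :: "nat \<Rightarrow> nat \<Rightarrow> (nat \<Rightarrow> nat list) \<Rightarrow> (nat \<Rightarrow> nat list) \<Rightarrow> (nat \<Rightarrow> nat option) \<Rightarrow> bool" where
  "player_optimal_stable N K plist alist \<mu> \<longleftrightarrow>
     stable N K plist alist \<mu> \<and>
     (\<forall>\<nu>. stable N K plist alist \<nu> \<longrightarrow> (\<forall>p<N. weakly_prefers (plist p) (\<mu> p) (\<nu> p)))"

end

theory Submission
  imports Defs
begin

lemma find_SomeD': "find P xs = Some q \<Longrightarrow> q \<in> set xs \<and> P q"
  by (induction xs) (auto split: if_splits)

definition inv_da :: "nat \<Rightarrow> nat \<Rightarrow> (nat \<Rightarrow> nat list) \<Rightarrow> da_state \<Rightarrow> bool" where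
  "inv_da N K plist s \<longleftrightarrow>
     (\<forall>p<N. fst s p \<le> K) \<and> (\<forall>p<N. fst s p \<le> N) \<and>
     (\<forall>a q. snd s a = Some q \<longrightarrow> q < N) \<and>
     (\<forall>a. K \<le> a \<longrightarrow> snd s a = None) \<and>
     (\<forall>p<N. \<forall>i<fst s p. snd s (plist p ! i) \<noteq> None) \<and>
     (\<forall>a b q. snd s a = Some q \<longrightarrow> snd s b = Some q \<longrightarrow> a = b)"

lemma key:
  assumes vp: "valid_prefs N K plist alist" and NK: "N \<le> K"
    and I: "inv_da N K plist s" and p: "p < N" and um: "\<not> da_matched K s p"
  shows "fst s p < N"
proof (rule ccontr)
  assume "\<not> fst s p < N"
  hence ge: "N \<le> fst s p" by simp
  have I3: "\<And>a q. snd s a = Some q \<Longrightarrow> q < N"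
   and I5: "\<And>i. i<fst s p \<Longrightarrow> snd s (plist p ! i) \<noteq> None"
   and I6: "\<And>a b q. snd s a = Some q \<Longrightarrow> snd s b = Some q \<Longrightarrow> a = b"
    using I p unfolding inv_da_def by auto
  have dp: "distinct (plist p)" and sp: "set (plist p) = {0..<K}" using vp p by (auto simp: valid_prefs_def)
  have len: "length (plist p) = K" using dp sp distinct_card by fastforce
  define f where "f i = the (snd s (plist p ! i))" for i
  have fi: "snd s (plist p ! i) = Some (f i)" if "i < N" for i
  proof -
    have "snd s (plist p ! i) \<noteq> None" using I5 ge that by simp
    then show ?thesis unfolding f_def by auto
  qed
  have "inj_on f {0..<N}"
  proof
    fix i j assume ij: "i \<in> {0..<N}" "j \<in> {0..<N}" "f i = f j"
    then have "plist p ! i = plist p ! j" using fi I6 by simp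
    then show "i = j" using dp len NK ij nth_eq_iff_index_eq by fastforce
  qed
  moreover have "f ` {0..<N} \<subseteq> {0..<N} - {p}"
  proof
    fix x assume "x \<in> f ` {0..<N}"
    then obtain i where i: "i < N" "x = f i" by auto
    have "x < N" using fi[OF i(1)] I3 i by simp
    moreover have "plist p ! i < K" using len sp i NK by (metis atLeastLessThan_iff less_le_trans nth_mem)
    then have "x \<noteq> p" using um fi[OF i(1)] i unfolding da_matched_def by auto
    ultimately show "x \<in> {0..<N} - {p}" by simp
  qed
  ultimately have "card {0..<N} \<le> card ({0..<N} - {p})"
    using card_inj_on_le by blast
  then show False using p by simp
qed

lemma step_fst: "fst (da_step N K plist alist s) p = (if da_active N K s p then Suc (fst s p) else fst s p)"
  by (simp add: da_step_def Let_def)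

lemma step_snd: "snd (da_step N K plist alist s) a =
   find (\<lambda>q. q \<in> set_option (snd s a) \<union> {p. da_active N K s p \<and> plist p ! fst s p = a}) (alist a)"
  by (simp add: da_step_def Let_def)

lemma inv_step:
  assumes vp: "valid_prefs N K plist alist" and NK: "N \<le> K"
    and I: "inv_da N K plist s"
  shows "inv_da N K plist (da_step N K plist alist s)"
proof -
  let ?s = "da_step N K plist alist s"
  have sp: "set (plist p) = {0..<K}" "distinct (plist p)" if "p < N" for p using vp that by (auto simp: valid_prefs_def)
  have len: "length (plist p) = K" if "p < N" for p using sp[OF that] distinct_card by fastforce
  have sa: "set (alist a) = {0..<N}" if "a < K" for a using vp that by (auto simp: valid_prefs_def)
  have act_arm: "plist p ! fst s p < K" if "da_active N K s p" for p
    using that len sp unfolding da_active_def by (metis atLeastLessThan_iff nth_mem)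
  have I1: "\<forall>p<N. fst ?s p \<le> K" using I unfolding inv_da_def step_fst da_active_def by auto
  have I2: "\<forall>p<N. fst ?s p \<le> N"
  proof (intro allI impI)
    fix p assume p: "p < N"
    show "fst ?s p \<le> N"
    proof (cases "da_active N K s p")
      case True
      then have "fst s p < N" using key[OF vp NK I p] unfolding da_active_def by blast
      then show ?thesis using True by (simp add: step_fst)
    next
      case False then show ?thesis using I p by (simp add: step_fst inv_da_def)
    qed
  qed
  have I4: "\<forall>a. K \<le> a \<longrightarrow> snd ?s a = None"
  proof (intro allI impI)
    fix a assume a: "K \<le> a"
    have "snd s a = None" using I a unfolding inv_da_def by blast
    moreover have "\<not> (da_active N K s p \<and> plist p ! fst s p = a)" for p using act_arm[of p] a by auto
    ultimately show "snd ?s a = None" unfolding step_snd by (simp add: find_None_iff)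
  qed
  have I3: "\<forall>a q. snd ?s a = Some q \<longrightarrow> q < N"
  proof (intro allI impI)
    fix a q assume h: "snd ?s a = Some q"
    have "a < K" using I4 h by (metis not_le option.distinct(1))
    then show "q < N" using h find_SomeD'[of _ "alist a" q] sa unfolding step_snd by fastforce
  qed
  have keep: "snd ?s a \<noteq> None" if nn: "snd s a \<noteq> None" and ak: "a < K" for a
  proof -
    obtain q where q: "snd s a = Some q" using nn by auto
    have "q < N" using I q unfolding inv_da_def by blast
    then have "q \<in> set (alist a)" using sa ak by auto
    then show ?thesis unfolding step_snd using q by (auto simp: find_None_iff)
  qed
  have I5: "\<forall>p<N. \<forall>i<fst ?s p. snd ?s (plist p ! i) \<noteq> None"
  proof (intro allI impI)
    fix p i assume p: "p < N" and i: "i < fst ?s p"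
    have ik: "i < K" using I1 p i by (meson less_le_trans)
    hence ak: "plist p ! i < K" using len[OF p] sp[OF p] by (metis atLeastLessThan_iff nth_mem)
    show "snd ?s (plist p ! i) \<noteq> None"
    proof (cases "i < fst s p")
      case True
      then show ?thesis using keep[OF _ ak] I p unfolding inv_da_def by blast
    next
      case False
      then have act: "da_active N K s p" and ieq: "i = fst s p" using i by (auto simp: step_fst split: if_splits)
      have "p \<in> set (alist (plist p ! i))" using sa[OF ak] p by auto
      then show ?thesis unfolding step_snd using act ieq by (auto simp: find_None_iff)
    qed
  qed
  have I6: "\<forall>a b q. snd ?s a = Some q \<longrightarrow> snd ?s b = Some q \<longrightarrow> a = b"
  proof (intro allI impI)
    fix a b q assume ha: "snd ?s a = Some q" and hb: "snd ?s b = Some q"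
    have A: "snd s a = Some q \<or> (da_active N K s q \<and> plist q ! fst s q = a)"
      using find_SomeD'[OF ha[unfolded step_snd]] by auto
    have B: "snd s b = Some q \<or> (da_active N K s q \<and> plist q ! fst s q = b)"
      using find_SomeD'[OF hb[unfolded step_snd]] by auto
    have nm: "\<not> (da_active N K s q \<and> snd s c = Some q)" for c
    proof
      assume h: "da_active N K s q \<and> snd s c = Some q"
      have "c < K" using I h unfolding inv_da_def by (metis not_le option.distinct(1))
      then show False using h unfolding da_active_def da_matched_def by blast
    qed
    show "a = b" using A B nm I unfolding inv_da_def by metis
  qed
  show ?thesis unfolding inv_da_def using I1 I2 I3 I4 I5 I6 by blast
qed

lemma inv_iter:
  assumes vp: "valid_prefs N K plist alist" and NK: "N \<le> K"
  shows "inv_da N K plist ((da_step N K plist alist ^^ m) da_init)"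
proof (induction m)
  case 0 then show ?case by (simp add: inv_da_def da_init_def)
next
  case (Suc m) then show ?case using inv_step[OF vp NK] by simp
qed

lemma part2:
  assumes vp: "valid_prefs N K plist alist" and NK: "N \<le> K"
    and st: "stable N K plist alist \<mu>" and p: "p < N"
  shows "\<exists>a. \<mu> p = Some a \<and> a \<in> set (take N (plist p))"
proof -
  have dp: "distinct (plist p)" and sp: "set (plist p) = {0..<K}" using vp p by (auto simp: valid_prefs_def)
  have len: "length (plist p) = K" using dp sp distinct_card by fastforce
  have m: "is_matching N K \<mu>" and nb: "\<forall>p<N. \<forall>a<K. \<not> blocking N plist alist \<mu> p a"
    using st unfolding stable_def by auto
  have matched: "\<mu> p \<noteq> None"
  proof
    assume none: "\<mu> p = None"
    have "\<exists>a<K. \<forall>q<N. \<mu> q \<noteq> Some a"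
    proof (rule ccontr)
      assume "\<not> ?thesis"
      then have all: "\<forall>a<K. \<exists>q<N. \<mu> q = Some a" by blast
      define g where "g a = (SOME q. q < N \<and> \<mu> q = Some a)" for a
      have g: "g a < N \<and> \<mu> (g a) = Some a" if "a < K" for a
        unfolding g_def by (rule someI_ex) (use all that in blast)
      have "inj_on g {0..<K}"
      proof (rule inj_onI)
        fix x y assume xy: "x \<in> {0..<K}" "y \<in> {0..<K}" and gxy: "g x = g y"
        have gx: "\<mu> (g x) = Some x" using g[of x] xy(1) by simp
        have gy: "\<mu> (g y) = Some y" using g[of y] xy(2) by simp
        show "x = y" using gx gy gxy by (metis option.inject)
      qed
      moreover have "g ` {0..<K} \<subseteq> {0..<N} - {p}"
      proof
        fix x assume "x \<in> g ` {0..<K}"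
        then obtain a where a: "a < K" "x = g a" by auto
        then show "x \<in> {0..<N} - {p}" using g[OF a(1)] none by auto
      qed
      ultimately have "card {0..<K} \<le> card ({0..<N} - {p})" using card_inj_on_le by blast
      then show False using p NK by simp
    qed
    then obtain a where "a < K" "\<forall>q<N. \<mu> q \<noteq> Some a" by blast
    then have "blocking N plist alist \<mu> p a" using none unfolding blocking_def by blast
    then show False using nb p \<open>a < K\<close> by blast
  qed
  then obtain b where b: "\<mu> p = Some b" by auto
  have bK: "b < K" using m p b unfolding is_matching_def by blast
  then have "b \<in> set (plist p)" using sp by simp
  then obtain j where j0: "j < length (plist p)" "plist p ! j = b" by (auto simp: in_set_conv_nth)
  then have j: "j < K" "plist p ! j = b" using len by auto
  have "j < N"
  proof (rule ccontr)
    assume "\<not> j < N"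
    hence jN: "N \<le> j" by simp
    have ex: "\<exists>q<N. \<mu> q = Some (plist p ! i)" if i: "i < N" for i
    proof -
      have ak: "plist p ! i < K" using i NK len sp by (metis atLeastLessThan_iff less_le_trans nth_mem)
      have "prefers (plist p) (plist p ! i) b" unfolding prefers_def using i jN j len by (intro exI[of _ i] exI[of _ j]) simp
      then have "\<not> ((\<forall>q<N. \<mu> q \<noteq> Some (plist p ! i)) \<or> (\<exists>q<N. \<mu> q = Some (plist p ! i) \<and> prefers (alist (plist p ! i)) p q))"
        using nb p ak b unfolding blocking_def by blast
      then show ?thesis by blast
    qed
    define f where "f i = (SOME q. q < N \<and> \<mu> q = Some (plist p ! i))" for i
    have f: "f i < N \<and> \<mu> (f i) = Some (plist p ! i)" if "i < N" for i
      unfolding f_def by (rule someI_ex) (use ex[OF that] in blast)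
    have "inj_on f {0..<N}"
    proof (rule inj_onI)
      fix x y assume xy: "x \<in> {0..<N}" "y \<in> {0..<N}" and fxy: "f x = f y"
      have fx: "\<mu> (f x) = Some (plist p ! x)" using f[of x] xy(1) by simp
      have fy: "\<mu> (f y) = Some (plist p ! y)" using f[of y] xy(2) by simp
      have "plist p ! x = plist p ! y" using fx fy fxy by (metis option.inject)
      then show "x = y" using nth_eq_iff_index_eq[OF dp, of x y] len NK \<open>x \<in> {0..<N}\<close> \<open>y \<in> {0..<N}\<close> by simp
    qed
    moreover have "f ` {0..<N} \<subseteq> {0..<N} - {p}"
    proof
      fix x assume "x \<in> f ` {0..<N}"
      then obtain i where i: "i < N" "x = f i" by auto
      have "plist p ! i \<noteq> b" using nth_eq_iff_index_eq[OF dp, of i j] len j i jN NK by simp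
      then have "x \<noteq> p" using f[OF i(1)] i b by auto
      then show "x \<in> {0..<N} - {p}" using f[OF i(1)] i by simp
    qed
    ultimately have "card {0..<N} \<le> card ({0..<N} - {p})" using card_inj_on_le by blast
    then show False using p by simp
  qed
  then have "take N (plist p) ! j = b" "j < length (take N (plist p))" using j len NK by auto
  then have "b \<in> set (take N (plist p))" by (metis nth_mem)
  then show ?thesis using b by blast
qed

theorem lemmaB3:
  fixes N K :: nat and plist alist :: "nat \<Rightarrow> nat list"
  assumes "N \<le> K"
    and "valid_prefs N K plist alist"
  shows "(\<forall>m p. p < N \<longrightarrow> fst ((da_step N K plist alist ^^ m) da_init) p \<le> N)
       \<and> (\<forall>\<mu>. player_optimal_stable N K plist alist \<mu> \<longrightarrow>
              (\<forall>p<N. \<exists>a. \<mu> p = Some a \<and> a \<in> set (take N (plist p))))"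
proof (intro conjI allI impI)
  fix m p assume "p < N"
  then show "fst ((da_step N K plist alist ^^ m) da_init) p \<le> N"
    using inv_iter[OF assms(2,1), of m] unfolding inv_da_def by blast
next
  fix \<mu> p assume "player_optimal_stable N K plist alist \<mu>" "p < N"
  then show "\<exists>a. \<mu> p = Some a \<and> a \<in> set (take N (plist p))"
    using part2[OF assms(2,1)] unfolding player_optimal_stable_def by blast
qed

end
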